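(* Let the data $S_0\supset\cdots\supset S_m$, $\delta$, $\kappa$, $T$ be as in the definition of a truncatable function $\psi$ below, let $(\epsilon_s)_{s\ge0}$ be a positive strictly decreasing sequence with $\epsilon_s\le\delta$ for all $s$, and let $c_0,\dots,c_m\in\mathbb{N}$ be counters. Consider the following truncation procedure applied to a point $\tilde x\in\mathbb{R}^n$: repeat { find the unique $i$ with $\tilde x\in S_i\setminus S_{i+1}$ (where $S_{m+1}=\emptyset$); if $\Gamma(\tilde x)<\epsilon_{c_i}$, set $\tilde x\leftarrow T(\tilde x,\epsilon_{c_i})$ and $c_i\leftarrow c_i+1$; otherwise stop }. Then this procedure terminates after at most $m$ applications of $T$.
   Context: $\psi=f+\varphi$ with $f:\mathbb{R}^n\to\mathbb{R}$ continuously differentiable and $\varphi:\mathbb{R}^n\to\mathbb{R}$ convex. For $x\in\mathbb{R}^n$ and $\|d\|=1$ let $\Gamma_{\max}(x,d)=\sup\{T>0: t\mapsto\psi(x+td)\text{ is continuously differentiable on }(0,T)\}$ and $\Gamma(x)=\inf_{\|d\|=1}\Gamma_{\max}(x,d)$. $\psi$ can be truncated if there exist sets $\mathbb{R}^n=S_0\supset S_1\supset\cdots\supset S_m$, $\delta\in(0,+\infty]$, $\kappa>0$, and $T:\mathbb{R}^n\times(0,\delta]\to\mathbb{R}^n$ such that (i) $\Gamma(x)\ge\delta$ for all $x\in S_m$; (ii) for any $a\in(0,\delta]$ and $x\in S_i\setminus S_{i+1}$, $i\in\{0,\dots,m-1\}$: if $\Gamma(x)\ge a$ then $T(x,a)=x$;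 otherwise $T(x,a)\in S_{i+1}$, $\Gamma(T(x,a))\ge a$ and $\|T(x,a)-x\|\le\kappa a$. *)

theory Defs
  imports "HOL-Analysis.Analysis"
begin

definition C1_on_UNIV :: "('a::euclidean_space \<Rightarrow> real) \<Rightarrow> bool" where
  "C1_on_UNIV f \<longleftrightarrow> (\<exists>f' :: 'a \<Rightarrow> ('a \<Rightarrow>\<^sub>L real).
      (\<forall>x. (f has_derivative blinfun_apply (f' x)) (at x)) \<and> continuous_on UNIV f')"

definition Gamma_max :: "('a::euclidean_space \<Rightarrow> real) \<Rightarrow> 'a \<Rightarrow> 'a \<Rightarrow> ereal" where
  "Gamma_max \<psi> x d = Sup {ereal T | T. T > 0 \<and>
       (\<lambda>t. \<psi> (x + t *\<^sub>R d)) C1_differentiable_on {0<..<T}}"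

definition Gamma :: "('a::euclidean_space \<Rightarrow> real) \<Rightarrow> 'a \<Rightarrow> ereal" where
  "Gamma \<psi> x = Inf {Gamma_max \<psi> x d | d. norm d = 1}"

definition truncatable ::
  "('a::euclidean_space \<Rightarrow> real) \<Rightarrow> (nat \<Rightarrow> 'a set) \<Rightarrow> nat \<Rightarrow> ereal \<Rightarrow> real \<Rightarrow> ('a \<Rightarrow> real \<Rightarrow> 'a) \<Rightarrow> bool"
  where
  "truncatable \<psi> S m \<delta> \<kappa> T \<longleftrightarrow>
     S 0 = UNIV \<and> (\<forall>i<m. S (Suc i) \<subseteq> S i) \<and>
     0 < \<delta> \<and> \<kappa> > 0 \<and>
     (\<forall>x\<in>S m. Gamma \<psi> x \<ge> \<delta>) \<and>
     (\<forall>a. 0 < a \<and> ereal a \<le> \<delta> \<longrightarrow>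
        (\<forall>i<m. \<forall>x \<in> S i - S (Suc i).
           (Gamma \<psi> x \<ge> ereal a \<longrightarrow> T x a = x) \<and>
           (\<not> Gamma \<psi> x \<ge> ereal a \<longrightarrow>
               T x a \<in> S (Suc i) \<and> Gamma \<psi> (T x a) \<ge> ereal a \<and>
               norm (T x a - x) \<le> \<kappa> * a)))"

definition Sext :: "(nat \<Rightarrow> 'a set) \<Rightarrow> nat \<Rightarrow> nat \<Rightarrow> 'a set" where
  "Sext S m i = (if i \<le> m then S i else {})"

definition level :: "(nat \<Rightarrow> 'a set) \<Rightarrow> nat \<Rightarrow> 'a \<Rightarrow> nat" where
  "level S m x = (THE i. x \<in> Sext S m i - Sext S m (Suc i))"

definition trunc_step ::
  "('a::euclidean_space \<Rightarrow> real) \<Rightarrow> (nat \<Rightarrow> 'a set) \<Rightarrow> nat \<Rightarrow> ('a \<Rightarrow> real \<Rightarrow> 'a) \<Rightarrow> (nat \<Rightarrow> real)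
    \<Rightarrow> 'a \<times> (nat \<Rightarrow> nat) \<Rightarrow> 'a \<times> (nat \<Rightarrow> nat)" where
  "trunc_step \<psi> S m T \<epsilon> st =
     (let x = fst st; c = snd st; i = level S m x in
        (T x (\<epsilon> (c i)), c(i := c i + 1)))"

definition trunc_stop ::
  "('a::euclidean_space \<Rightarrow> real) \<Rightarrow> (nat \<Rightarrow> 'a set) \<Rightarrow> nat \<Rightarrow> (nat \<Rightarrow> real)
    \<Rightarrow> 'a \<times> (nat \<Rightarrow> nat) \<Rightarrow> bool" where
  "trunc_stop \<psi> S m \<epsilon> st =
     (let x = fst st; c = snd st; i = level S m x in
        \<not> (Gamma \<psi> x < ereal (\<epsilon> (c i))))"

end

theory Submission
  imports Defs
begin

lemma chain_anti:
  assumes "\<forall>i<m. S (Suc i) \<subseteq> S i" "a \<le> b" "b \<le> m"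
  shows "S b \<subseteq> S a"
  using assms(2,3)
proof (induction b)
  case 0 then show ?case by simp
next
  case (Suc b)
  show ?case
  proof (cases "a = Suc b")
    case True then show ?thesis by simp
  next
    case False
    then have "a \<le> b" using Suc.prems by simp
    then have "S b \<subseteq> S a" using Suc by simp
    moreover have "S (Suc b) \<subseteq> S b" using assms(1) Suc.prems by simp
    ultimately show ?thesis by blast
  qed
qed

lemma level_props:
  assumes "S 0 = UNIV" "\<forall>i<m. S (Suc i) \<subseteq> S i"
  shows "level S m x \<le> m \<and> x \<in> S (level S m x) \<and>
         (\<forall>j\<le>m. x \<in> S j \<longrightarrow> j \<le> level S m x)"
proof -
  define A where "A = {j. j \<le> m \<and> x \<in> S j}"
  have finA: "finite A" unfolding A_def by simp
  have "0 \<in> A" unfolding A_def using assms(1) by simp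
  then have neA: "A \<noteq> {}" by blast
  define i0 where "i0 = Max A"
  have i0A: "i0 \<in> A" unfolding i0_def using finA neA by simp
  have i0max: "\<And>j. j \<in> A \<Longrightarrow> j \<le> i0" unfolding i0_def using finA by simp
  have mem: "x \<in> Sext S m i0 - Sext S m (Suc i0)"
  proof -
    have "x \<in> Sext S m i0" using i0A unfolding A_def Sext_def by simp
    moreover have "x \<notin> Sext S m (Suc i0)"
    proof
      assume "x \<in> Sext S m (Suc i0)"
      then have "Suc i0 \<in> A" unfolding Sext_def A_def by (simp split: if_splits)
      then show False using i0max by fastforce
    qed
    ultimately show ?thesis by blast
  qed
  have uniq: "\<And>j. x \<in> Sext S m j - Sext S m (Suc j) \<Longrightarrow> j = i0"
  proof -
    fix j assume h: "x \<in> Sext S m j - Sext S m (Suc j)"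
    then have jm: "j \<le> m" and xj: "x \<in> S j" unfolding Sext_def by (auto split: if_splits)
    then have "j \<le> i0" using i0max unfolding A_def by simp
    moreover have "\<not> j < i0"
    proof
      assume "j < i0"
      moreover have "i0 \<le> m" "x \<in> S i0" using i0A unfolding A_def by auto
      ultimately have "x \<in> S (Suc j)" using chain_anti[OF assms(2), of "Suc j" i0] by auto
      then show False using h \<open>j < i0\<close> \<open>i0 \<le> m\<close> unfolding Sext_def by auto
    qed
    ultimately show "j = i0" by simp
  qed
  have "level S m x = i0" unfolding level_def
    using mem uniq by (rule the_equality)
  then show ?thesis using i0A i0max unfolding A_def by auto
qed

theorem lemma3p1:
  fixes \<psi> :: "'a::euclidean_space \<Rightarrow> real"
    and S :: "nat \<Rightarrow> 'a set" and m :: nat and \<delta> :: ereal and \<kappa> :: real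
    and T :: "'a \<Rightarrow> real \<Rightarrow> 'a" and \<epsilon> :: "nat \<Rightarrow> real"
    and x0 :: 'a and c0 :: "nat \<Rightarrow> nat"
  assumes "\<exists>f \<phi>. C1_on_UNIV f \<and> convex_on UNIV \<phi> \<and> \<psi> = (\<lambda>x. f x + \<phi> x)"
    and "truncatable \<psi> S m \<delta> \<kappa> T"
    and "\<forall>s. 0 < \<epsilon> s"
    and "\<forall>s t. s < t \<longrightarrow> \<epsilon> t < \<epsilon> s"
    and "\<forall>s. ereal (\<epsilon> s) \<le> \<delta>"
  shows "\<exists>k\<le>m. trunc_stop \<psi> S m \<epsilon> ((trunc_step \<psi> S m T \<epsilon> ^^ k) (x0, c0))"
proof -
  note tr = assms(2)[unfolded truncatable_def]
  have S0: "S 0 = UNIV" and ch: "\<forall>i<m. S (Suc i) \<subseteq> S i" using tr by auto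
  have Sm: "\<forall>x\<in>S m. Gamma \<psi> x \<ge> \<delta>" using tr by auto
  have Tp: "\<And>a i x. 0 < a \<Longrightarrow> ereal a \<le> \<delta> \<Longrightarrow> i < m \<Longrightarrow> x \<in> S i - S (Suc i) \<Longrightarrow>
      \<not> Gamma \<psi> x \<ge> ereal a \<Longrightarrow> T x a \<in> S (Suc i)" using tr by blast
  let ?it = "\<lambda>k. (trunc_step \<psi> S m T \<epsilon> ^^ k) (x0, c0)"
  let ?st = "trunc_stop \<psi> S m \<epsilon>"
  have step: "\<not> ?st p \<Longrightarrow> level S m (fst p) < level S m (fst (trunc_step \<psi> S m T \<epsilon> p))" for p
  proof -
    assume ns: "\<not> ?st p"
    obtain x c where p: "p = (x, c)" by force
    define i where "i = level S m x"
    have L: "i \<le> m" "x \<in> S i" "\<forall>j\<le>m. x \<in> S j \<longrightarrow> j \<le> i"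
      using level_props[OF S0 ch, of x] unfolding i_def by auto
    have lt: "Gamma \<psi> x < ereal (\<epsilon> (c i))" using ns unfolding p trunc_stop_def i_def Let_def by simp
    have im: "i < m"
    proof (rule ccontr)
      assume "\<not> i < m"
      then have "i = m" using L by simp
      then have "Gamma \<psi> x \<ge> \<delta>" using Sm L by auto
      then show False using lt assms(5) by (meson order.trans not_le)
    qed
    have "x \<notin> S (Suc i)"
    proof
      assume "x \<in> S (Suc i)"
      then have "Suc i \<le> i" using L(3) im by (simp add: Suc_leI)
      then show False by simp
    qed
    then have "T x (\<epsilon> (c i)) \<in> S (Suc i)"
      using Tp[of "\<epsilon> (c i)" i x] assms(3,5) im L lt by (simp add: not_le)
    moreover have "fst (trunc_step \<psi> S m T \<epsilon> p) = T x (\<epsilon> (c i))"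
      unfolding p trunc_step_def i_def Let_def by simp
    ultimately have "Suc i \<le> level S m (fst (trunc_step \<psi> S m T \<epsilon> p))"
      using level_props[OF S0 ch, of "T x (\<epsilon> (c i))"] im by auto
    then show ?thesis unfolding p i_def by simp
  qed
  have main: "(\<exists>j\<le>k. ?st (?it j)) \<or> k \<le> level S m (fst (?it k))" for k
  proof (induction k)
    case 0 then show ?case by simp
  next
    case (Suc k)
    show ?case
    proof (cases "\<exists>j\<le>k. ?st (?it j)")
      case True then show ?thesis using le_SucI by blast
    next
      case False
      then have "k \<le> level S m (fst (?it k))" "\<not> ?st (?it k)" using Suc by auto
      then have "Suc k \<le> level S m (fst (?it (Suc k)))" using step[of "?it k"] by simp
      then show ?thesis by blast
    qed
  qed
  show ?thesis
  proof (cases "\<exists>j\<le>m. ?st (?it j)")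
    case True then show ?thesis by blast
  next
    case False
    then have ge: "m \<le> level S m (fst (?it m))" using main[of m] by blast
    have "level S m (fst (?it m)) \<le> m" "fst (?it m) \<in> S (level S m (fst (?it m)))"
      using level_props[OF S0 ch] by auto
    then have lm: "level S m (fst (?it m)) = m" "fst (?it m) \<in> S m" using ge by auto
    then have "Gamma \<psi> (fst (?it m)) \<ge> \<delta>" using Sm by auto
    then have "?st (?it m)" unfolding trunc_stop_def Let_def lm(1)
      using assms(5) by (meson order.trans not_less)
    then show ?thesis by blast
  qed
qed

end
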